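(* Let $\mathcal K$ be a finitely complete 2-category with a good yoneda structure. Let $A$ be an admissible object, $f:A\to C$ and $g:A\to B$ admissible 1-cells, $h:B\to C$ a 1-cell, $\phi:f\Rightarrow hg$ a 2-cell, and $\phi':B(g,1)\Rightarrow C(f,1)h$ the corresponding 2-cell (the unique one with $(C(f,1)\phi)\cdot\chi^f=(\phi'g)\cdot\chi^g$). Then: (1) $\phi$ exhibits $h$ as a left extension of $f$ along $g$ iff $\phi'$ exhibits $h$ as a left lifting of $B(g,1)$ along $C(f,1)$; (2) $\phi$ exhibits $h$ as a pointwise left extension of $f$ along $g$ iff $\phi'$ exhibits $h$ as an absolute left lifting of $B(g,1)$ along $C(f,1)$; (3) $\phi$ exhibits $g$ as an absolute left lifting of $f$ along $h$ iff $\phi'$ is an isomorphism.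
   Context: For $f:A\to B$, $g:C\to B$ the lax pullback $f/g$ has projections $p:f/g\to A$, $q:f/g\to C$ and universal 2-cell $\lambda:fp\Rightarrow gq$. Given $f:A\to C$, $g:A\to B$, $h:B\to C$, a 2-cell $\phi:f\Rightarrow hg$ exhibits $h$ as a left extension of $f$ along $g$ if for every $k:B\to C$, $\kappa\mapsto(\kappa g)\cdot\phi$ is a bijection from 2-cells $h\Rightarrow k$ to 2-cells $f\Rightarrow kg$; it exhibits $g$ as a left lifting of $f$ along (through) $h$ if for every $k:A\to B$, $\kappa\mapsto(h\kappa)\cdot\phi$ is a bijection from 2-cells $g\Rightarrow k$ to 2-cells $f\Rightarrow hk$; the lifting is absolute if $\phi j$ exhibits $gj$ as a left lifting of $fj$ along $h$ for all $j:D\to A$. $\phi$ exhibits $h$ as a pointwise left extension of $f$ along $g$ if for every $c:X\to B$, with lax pullback $p:g/c\to A$, $q:g/c\to X$, $\lambda:gp\Rightarrow cq$, the 2-cell $(h\lambda)\cdot(\phi p)$ exhibits $hc$ as a left extension of $fp$ along $q$. A good yoneda structure: a class of admissible 1-cells with $fg$ admissible whenever $f$ is; $A$ admissible when $1_A$ is; for admissible $A$ an object $\mathcal PA$ and admissible $y_A:A\to\mathcal PA$; for $f:A\to B$ with $A$, $f$ admissible a 1-cell $B(f,1):B\to\mathcal PA$ and a 2-cell $\chi^f:y_A\Rightarrow B(f,1)f$; such that (i) $\chi^f$ exhibits $f$ as an absolute left lifting of $y_A$ through $B(f,1)$; (ii) if $A$, $f:A\to B$ admissible and $\psi:y_A\Rightarrow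 kf$ exhibits $f$ as an absolute left lifting of $y_A$ along $k$, then $\psi$ exhibits $k$ as a pointwise left extension of $y_A$ along $f$. In this setting $\chi^g$ exhibits $B(g,1)$ as a left extension of $y_A$ along $g$, so $\phi\mapsto\phi'$ (defined by the equation in the claim) is a well-defined bijection between 2-cells $f\Rightarrow hg$ and 2-cells $B(g,1)\Rightarrow C(f,1)h$. *)

theory Defs
  imports Main
begin

text \<open>A strict 2-category with objects of type 'o, 1-cells of type 'a, 2-cells of type 'c.
  cmp g f is the composite of f : A -> B followed by g : B -> C (written g f in the paper).
  vc beta alpha is vertical composite beta . alpha (alpha : f => g, beta : g => h).
  hc beta alpha is horizontal composite (alpha : f => f', beta : g => g', giving g f => g' f').\<close>

record ('o,'a,'c) twocat_data =
  ob   :: "'o set"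
  arr  :: "'a set"
  src  :: "'a \<Rightarrow> 'o"
  trg  :: "'a \<Rightarrow> 'o"
  ide  :: "'o \<Rightarrow> 'a"
  cmp  :: "'a \<Rightarrow> 'a \<Rightarrow> 'a"
  cell :: "'c set"
  dom2 :: "'c \<Rightarrow> 'a"
  cod2 :: "'c \<Rightarrow> 'a"
  id2  :: "'a \<Rightarrow> 'c"
  vc   :: "'c \<Rightarrow> 'c \<Rightarrow> 'c"
  hc   :: "'c \<Rightarrow> 'c \<Rightarrow> 'c"

definition hom :: "('o,'a,'c,'m) twocat_data_scheme \<Rightarrow> 'o \<Rightarrow> 'o \<Rightarrow> 'a set" where
  "hom K A B = {f \<in> arr K. src K f = A \<and> trg K f = B}"

definition cells :: "('o,'a,'c,'m) twocat_data_scheme \<Rightarrow> 'a \<Rightarrow> 'a \<Rightarrow> 'c set" where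
  "cells K f g = {\<alpha> \<in> cell K. dom2 K \<alpha> = f \<and> cod2 K \<alpha> = g}"

text \<open>Whiskering: wr K alpha g is (alpha g), wl K h alpha is (h alpha).\<close>
definition wr :: "('o,'a,'c,'m) twocat_data_scheme \<Rightarrow> 'c \<Rightarrow> 'a \<Rightarrow> 'c" where
  "wr K \<alpha> g = hc K \<alpha> (id2 K g)"

definition wl :: "('o,'a,'c,'m) twocat_data_scheme \<Rightarrow> 'a \<Rightarrow> 'c \<Rightarrow> 'c" where
  "wl K h \<alpha> = hc K (id2 K h) \<alpha>"

locale twocat =
  fixes K :: "('o,'a,'c,'m) twocat_data_scheme"
  assumes arr_src: "f \<in> arr K \<Longrightarrow> src K f \<in> ob K"
      and arr_trg: "f \<in> arr K \<Longrightarrow> trg K f \<in> ob K"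
      and ide_hom: "A \<in> ob K \<Longrightarrow> ide K A \<in> hom K A A"
      and cmp_hom: "f \<in> hom K A B \<Longrightarrow> g \<in> hom K B C \<Longrightarrow> cmp K g f \<in> hom K A C"
      and cmp_ide_right: "f \<in> hom K A B \<Longrightarrow> cmp K f (ide K A) = f"
      and cmp_ide_left: "f \<in> hom K A B \<Longrightarrow> cmp K (ide K B) f = f"
      and cmp_assoc: "f \<in> hom K A B \<Longrightarrow> g \<in> hom K B C \<Longrightarrow> h \<in> hom K C D \<Longrightarrow>
                      cmp K h (cmp K g f) = cmp K (cmp K h g) f"
      and cell_dom: "\<alpha> \<in> cell K \<Longrightarrow> dom2 K \<alpha> \<in> arr K"
      and cell_cod: "\<alpha> \<in> cell K \<Longrightarrow> cod2 K \<alpha> \<in> arr K"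
      and cell_src: "\<alpha> \<in> cell K \<Longrightarrow> src K (dom2 K \<alpha>) = src K (cod2 K \<alpha>)"
      and cell_trg: "\<alpha> \<in> cell K \<Longrightarrow> trg K (dom2 K \<alpha>) = trg K (cod2 K \<alpha>)"
      and id2_cells: "f \<in> arr K \<Longrightarrow> id2 K f \<in> cells K f f"
      and vc_cells: "\<alpha> \<in> cells K f g \<Longrightarrow> \<beta> \<in> cells K g h \<Longrightarrow> vc K \<beta> \<alpha> \<in> cells K f h"
      and vc_id_right: "\<alpha> \<in> cells K f g \<Longrightarrow> vc K \<alpha> (id2 K f) = \<alpha>"
      and vc_id_left: "\<alpha> \<in> cells K f g \<Longrightarrow> vc K (id2 K g) \<alpha> = \<alpha>"
      and vc_assoc: "\<alpha> \<in> cells K f g \<Longrightarrow> \<beta> \<in> cells K g h \<Longrightarrow> \<gamma> \<in> cells K h k \<Longrightarrow>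
                     vc K \<gamma> (vc K \<beta> \<alpha>) = vc K (vc K \<gamma> \<beta>) \<alpha>"
      and hc_cells: "\<alpha> \<in> cells K f f' \<Longrightarrow> \<beta> \<in> cells K g g' \<Longrightarrow> trg K f = src K g \<Longrightarrow>
                     hc K \<beta> \<alpha> \<in> cells K (cmp K g f) (cmp K g' f')"
      and hc_id_right: "\<alpha> \<in> cell K \<Longrightarrow> hc K \<alpha> (id2 K (ide K (src K (dom2 K \<alpha>)))) = \<alpha>"
      and hc_id_left: "\<alpha> \<in> cell K \<Longrightarrow> hc K (id2 K (ide K (trg K (dom2 K \<alpha>)))) \<alpha> = \<alpha>"
      and hc_assoc: "\<alpha> \<in> cell K \<Longrightarrow> \<beta> \<in> cell K \<Longrightarrow> \<gamma> \<in> cell K \<Longrightarrow>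
                     trg K (dom2 K \<alpha>) = src K (dom2 K \<beta>) \<Longrightarrow> trg K (dom2 K \<beta>) = src K (dom2 K \<gamma>) \<Longrightarrow>
                     hc K \<gamma> (hc K \<beta> \<alpha>) = hc K (hc K \<gamma> \<beta>) \<alpha>"
      and hc_id2: "f \<in> hom K A B \<Longrightarrow> g \<in> hom K B C \<Longrightarrow>
                   hc K (id2 K g) (id2 K f) = id2 K (cmp K g f)"
      and interchange: "\<alpha> \<in> cells K f f' \<Longrightarrow> \<alpha>' \<in> cells K f' f'' \<Longrightarrow>
                        \<beta> \<in> cells K g g' \<Longrightarrow> \<beta>' \<in> cells K g' g'' \<Longrightarrow> trg K f = src K g \<Longrightarrow>
                        hc K (vc K \<beta>' \<beta>) (vc K \<alpha>' \<alpha>) = vc K (hc K \<beta>' \<alpha>') (hc K \<beta> \<alpha>)"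

definition iso2 :: "('o,'a,'c,'m) twocat_data_scheme \<Rightarrow> 'c \<Rightarrow> bool" where
  "iso2 K \<alpha> \<longleftrightarrow> \<alpha> \<in> cell K \<and>
     (\<exists>\<beta> \<in> cells K (cod2 K \<alpha>) (dom2 K \<alpha>).
        vc K \<beta> \<alpha> = id2 K (dom2 K \<alpha>) \<and> vc K \<alpha> \<beta> = id2 K (cod2 K \<alpha>))"

definition left_ext :: "('o,'a,'c,'m) twocat_data_scheme \<Rightarrow> 'a \<Rightarrow> 'a \<Rightarrow> 'a \<Rightarrow> 'c \<Rightarrow> bool" where
  "left_ext K f g h \<phi> \<longleftrightarrow>
     (\<forall>k \<in> hom K (trg K g) (trg K f).
        bij_betw (\<lambda>\<kappa>. vc K (wr K \<kappa> g) \<phi>) (cells K h k) (cells K f (cmp K k g)))"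

definition left_lift :: "('o,'a,'c,'m) twocat_data_scheme \<Rightarrow> 'a \<Rightarrow> 'a \<Rightarrow> 'a \<Rightarrow> 'c \<Rightarrow> bool" where
  "left_lift K f h g \<phi> \<longleftrightarrow>
     (\<forall>k \<in> hom K (src K g) (trg K g).
        bij_betw (\<lambda>\<kappa>. vc K (wl K h \<kappa>) \<phi>) (cells K g k) (cells K f (cmp K h k)))"

definition abs_left_lift :: "('o,'a,'c,'m) twocat_data_scheme \<Rightarrow> 'a \<Rightarrow> 'a \<Rightarrow> 'a \<Rightarrow> 'c \<Rightarrow> bool" where
  "abs_left_lift K f h g \<phi> \<longleftrightarrow>
     (\<forall>D. \<forall>j \<in> hom K D (src K g).
        left_lift K (cmp K f j) h (cmp K g j) (wr K \<phi> j))"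

definition is_comma ::
  "('o,'a,'c,'m) twocat_data_scheme \<Rightarrow> 'a \<Rightarrow> 'a \<Rightarrow> 'o \<Rightarrow> 'a \<Rightarrow> 'a \<Rightarrow> 'c \<Rightarrow> bool" where
  "is_comma K f g P p q lam \<longleftrightarrow>
     f \<in> arr K \<and> g \<in> arr K \<and> trg K f = trg K g \<and>
     p \<in> hom K P (src K f) \<and> q \<in> hom K P (src K g) \<and>
     lam \<in> cells K (cmp K f p) (cmp K g q) \<and>
     (\<forall>X a c \<alpha>. a \<in> hom K X (src K f) \<longrightarrow> c \<in> hom K X (src K g) \<longrightarrow>
        \<alpha> \<in> cells K (cmp K f a) (cmp K g c) \<longrightarrow>
        (\<exists>!u. u \<in> hom K X P \<and> cmp K p u = a \<and> cmp K q u = c \<and> wr K lam u = \<alpha>)) \<and>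
     (\<forall>X u v \<sigma> \<tau>. u \<in> hom K X P \<longrightarrow> v \<in> hom K X P \<longrightarrow>
        \<sigma> \<in> cells K (cmp K p u) (cmp K p v) \<longrightarrow> \<tau> \<in> cells K (cmp K q u) (cmp K q v) \<longrightarrow>
        vc K (wl K g \<tau>) (wr K lam u) = vc K (wr K lam v) (wl K f \<sigma>) \<longrightarrow>
        (\<exists>!\<theta>. \<theta> \<in> cells K u v \<and> wl K p \<theta> = \<sigma> \<and> wl K q \<theta> = \<tau>))"

definition is_pullback ::
  "('o,'a,'c,'m) twocat_data_scheme \<Rightarrow> 'a \<Rightarrow> 'a \<Rightarrow> 'o \<Rightarrow> 'a \<Rightarrow> 'a \<Rightarrow> bool" where
  "is_pullback K f g P p q \<longleftrightarrow>
     f \<in> arr K \<and> g \<in> arr K \<and> trg K f = trg K g \<and>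
     p \<in> hom K P (src K f) \<and> q \<in> hom K P (src K g) \<and> cmp K f p = cmp K g q \<and>
     (\<forall>X a b. a \<in> hom K X (src K f) \<longrightarrow> b \<in> hom K X (src K g) \<longrightarrow>
        cmp K f a = cmp K g b \<longrightarrow>
        (\<exists>!u. u \<in> hom K X P \<and> cmp K p u = a \<and> cmp K q u = b)) \<and>
     (\<forall>X u v \<sigma> \<tau>. u \<in> hom K X P \<longrightarrow> v \<in> hom K X P \<longrightarrow>
        \<sigma> \<in> cells K (cmp K p u) (cmp K p v) \<longrightarrow> \<tau> \<in> cells K (cmp K q u) (cmp K q v) \<longrightarrow>
        wl K f \<sigma> = wl K g \<tau> \<longrightarrow>
        (\<exists>!\<theta>. \<theta> \<in> cells K u v \<and> wl K p \<theta> = \<sigma> \<and> wl K q \<theta> = \<tau>))"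

definition is_terminal :: "('o,'a,'c,'m) twocat_data_scheme \<Rightarrow> 'o \<Rightarrow> bool" where
  "is_terminal K T \<longleftrightarrow> T \<in> ob K \<and>
     (\<forall>X \<in> ob K. \<exists>t. hom K X T = {t} \<and> cells K t t = {id2 K t})"

text \<open>Finite completeness of a 2-category: by Street's theorem, finite (weighted)
  2-limits are generated by a terminal object, pullbacks and cotensors with 2;
  cotensors with 2 are exactly the comma objects of identities, so we require a
  terminal object, all 2-pullbacks and all comma objects.\<close>
definition finitely_complete :: "('o,'a,'c,'m) twocat_data_scheme \<Rightarrow> bool" where
  "finitely_complete K \<longleftrightarrow>
     (\<exists>T. is_terminal K T) \<and>
     (\<forall>f g. f \<in> arr K \<longrightarrow> g \<in> arr K \<longrightarrow> trg K f = trg K g \<longrightarrow>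
        (\<exists>P p q. is_pullback K f g P p q)) \<and>
     (\<forall>f g. f \<in> arr K \<longrightarrow> g \<in> arr K \<longrightarrow> trg K f = trg K g \<longrightarrow>
        (\<exists>P p q lam. is_comma K f g P p q lam))"

definition pointwise_left_ext :: "('o,'a,'c,'m) twocat_data_scheme \<Rightarrow> 'a \<Rightarrow> 'a \<Rightarrow> 'a \<Rightarrow> 'c \<Rightarrow> bool" where
  "pointwise_left_ext K f g h \<phi> \<longleftrightarrow>
     (\<forall>X c P p q lam. c \<in> hom K X (trg K g) \<longrightarrow> is_comma K g c P p q lam \<longrightarrow>
        left_ext K (cmp K f p) q (cmp K h c) (vc K (wl K h lam) (wr K \<phi> p)))"

record ('o,'a,'c) yoneda_data =
  adm  :: "'a set"
  PP   :: "'o \<Rightarrow> 'o"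
  yon  :: "'o \<Rightarrow> 'a"
  YF   :: "'a \<Rightarrow> 'a"        \<comment> \<open>for f : A -> B, the 1-cell B(f,1) : B -> PA\<close>
  chi  :: "'a \<Rightarrow> 'c"        \<comment> \<open>chi^f : y_A => B(f,1) f\<close>

definition adm_ob :: "('o,'a,'c,'m) twocat_data_scheme \<Rightarrow> ('o,'a,'c) yoneda_data \<Rightarrow> 'o \<Rightarrow> bool" where
  "adm_ob K Y A \<longleftrightarrow> A \<in> ob K \<and> ide K A \<in> adm Y"

definition good_yoneda :: "('o,'a,'c,'m) twocat_data_scheme \<Rightarrow> ('o,'a,'c) yoneda_data \<Rightarrow> bool" where
  "good_yoneda K Y \<longleftrightarrow>
     adm Y \<subseteq> arr K \<and>
     (\<forall>f g. f \<in> adm Y \<longrightarrow> g \<in> arr K \<longrightarrow> trg K g = src K f \<longrightarrow> cmp K f g \<in> adm Y) \<and>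
     (\<forall>A. adm_ob K Y A \<longrightarrow> PP Y A \<in> ob K \<and> yon Y A \<in> hom K A (PP Y A) \<and> yon Y A \<in> adm Y) \<and>
     (\<forall>A B f. adm_ob K Y A \<longrightarrow> f \<in> hom K A B \<longrightarrow> f \<in> adm Y \<longrightarrow>
        YF Y f \<in> hom K B (PP Y A) \<and>
        chi Y f \<in> cells K (yon Y A) (cmp K (YF Y f) f) \<and>
        abs_left_lift K (yon Y A) (YF Y f) f (chi Y f)) \<and>
     (\<forall>A B f k \<psi>. adm_ob K Y A \<longrightarrow> f \<in> hom K A B \<longrightarrow> f \<in> adm Y \<longrightarrow>
        k \<in> hom K B (PP Y A) \<longrightarrow> \<psi> \<in> cells K (yon Y A) (cmp K k f) \<longrightarrow>
        abs_left_lift K (yon Y A) k f \<psi> \<longrightarrow>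
        pointwise_left_ext K (yon Y A) f k \<psi>)"

end

theory Submission
  imports Defs
begin


lemma bij_square:
  assumes "bij_betw X T2 U" "bij_betw T T1 U" "L ` S \<subseteq> T2" "E ` S \<subseteq> T1"
    "\<And>s. s \<in> S \<Longrightarrow> X (L s) = T (E s)"
  shows "bij_betw L S T2 \<longleftrightarrow> bij_betw E S T1"
proof -
  have "bij_betw L S T2 \<longleftrightarrow> bij_betw (X \<circ> L) S U" by (rule bij_betw_comp_iff2[OF assms(1,3)])
  also have "\<dots> \<longleftrightarrow> bij_betw (T \<circ> E) S U" by (rule bij_betw_cong) (simp add: assms(5))
  also have "\<dots> \<longleftrightarrow> bij_betw E S T1" by (rule bij_betw_comp_iff2[OF assms(2,4), symmetric])
  finally show ?thesis .
qed

context twocat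
begin

lemma homD: "f \<in> hom K A B \<Longrightarrow> f \<in> arr K \<and> src K f = A \<and> trg K f = B"
  by (simp add: hom_def)

lemma homI: "f \<in> arr K \<Longrightarrow> src K f = A \<Longrightarrow> trg K f = B \<Longrightarrow> f \<in> hom K A B"
  by (simp add: hom_def)

lemma cellsD: "\<alpha> \<in> cells K f g \<Longrightarrow> \<alpha> \<in> cell K \<and> dom2 K \<alpha> = f \<and> cod2 K \<alpha> = g"
  by (simp add: cells_def)

lemma cells_hom: "\<alpha> \<in> cells K f g \<Longrightarrow> f \<in> hom K A B \<Longrightarrow> g \<in> hom K A B"
  using cell_cod cell_src cell_trg by (auto simp: cells_def hom_def)

lemma cells_hom': "\<alpha> \<in> cells K f g \<Longrightarrow> g \<in> hom K A B \<Longrightarrow> f \<in> hom K A B"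
  using cell_dom cell_src cell_trg by (auto simp: cells_def hom_def)

lemma id2_cells': "f \<in> hom K A B \<Longrightarrow> id2 K f \<in> cells K f f"
  using id2_cells homD by blast

lemma id2D: "f \<in> arr K \<Longrightarrow> id2 K f \<in> cell K \<and> dom2 K (id2 K f) = f \<and> cod2 K (id2 K f) = f"
  using id2_cells cellsD by blast

lemma wr_cells: "\<alpha> \<in> cells K f g \<Longrightarrow> f \<in> hom K A B \<Longrightarrow> j \<in> hom K D A \<Longrightarrow>
   wr K \<alpha> j \<in> cells K (cmp K f j) (cmp K g j)"
  unfolding wr_def by (rule hc_cells) (auto dest: homD intro: id2_cells')

lemma wl_cells: "\<alpha> \<in> cells K f g \<Longrightarrow> f \<in> hom K A B \<Longrightarrow> h \<in> hom K B C \<Longrightarrow>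
   wl K h \<alpha> \<in> cells K (cmp K h f) (cmp K h g)"
  unfolding wl_def by (rule hc_cells) (auto dest: homD intro: id2_cells')

lemma vc_id2: "f \<in> hom K A B \<Longrightarrow> vc K (id2 K f) (id2 K f) = id2 K f"
  using vc_id_left id2_cells' by blast

lemma wl_vc: "\<alpha> \<in> cells K f g \<Longrightarrow> \<beta> \<in> cells K g k \<Longrightarrow> f \<in> hom K A B \<Longrightarrow> h \<in> hom K B C \<Longrightarrow>
   wl K h (vc K \<beta> \<alpha>) = vc K (wl K h \<beta>) (wl K h \<alpha>)"
  unfolding wl_def
  using interchange[of \<alpha> f g \<beta> k "id2 K h" h h "id2 K h" h] vc_id2[of h B C]
  by (auto dest: homD intro: id2_cells')

lemma wr_vc: "\<alpha> \<in> cells K f g \<Longrightarrow> \<beta> \<in> cells K g k \<Longrightarrow> f \<in> hom K A B \<Longrightarrow> j \<in> hom K D A \<Longrightarrow>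
   wr K (vc K \<beta> \<alpha>) j = vc K (wr K \<beta> j) (wr K \<alpha> j)"
  unfolding wr_def
  using interchange[of "id2 K j" j j "id2 K j" j \<alpha> f g \<beta> k] vc_id2[of j D A]
  by (auto dest: homD intro: id2_cells')

lemma wl_wl: "\<alpha> \<in> cells K f g \<Longrightarrow> f \<in> hom K A B \<Longrightarrow> h \<in> hom K B C \<Longrightarrow> k \<in> hom K C D \<Longrightarrow>
   wl K k (wl K h \<alpha>) = wl K (cmp K k h) \<alpha>"
  unfolding wl_def
  using hc_assoc[of \<alpha> "id2 K h" "id2 K k"] hc_id2[of h B C k D]
  using id2D by (auto dest!: homD cellsD)

lemma wr_wr: "\<alpha> \<in> cells K f g \<Longrightarrow> f \<in> hom K A B \<Longrightarrow> j \<in> hom K D A \<Longrightarrow> i \<in> hom K E D \<Longrightarrow>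
   wr K (wr K \<alpha> j) i = wr K \<alpha> (cmp K j i)"
  unfolding wr_def
  using hc_assoc[of "id2 K i" "id2 K j" \<alpha>] hc_id2[of i E D j A]
  using id2D by (auto dest!: homD cellsD)

lemma wl_wr: "\<alpha> \<in> cells K f g \<Longrightarrow> f \<in> hom K A B \<Longrightarrow> j \<in> hom K D A \<Longrightarrow> h \<in> hom K B C \<Longrightarrow>
   wl K h (wr K \<alpha> j) = wr K (wl K h \<alpha>) j"
  unfolding wr_def wl_def
  using hc_assoc[of "id2 K j" \<alpha> "id2 K h"]
  using id2D by (auto dest!: homD cellsD)

lemma wr_ide: "\<alpha> \<in> cells K f g \<Longrightarrow> f \<in> hom K A B \<Longrightarrow> wr K \<alpha> (ide K A) = \<alpha>"
  unfolding wr_def using hc_id_right[of \<alpha>] by (auto dest!: homD cellsD)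

lemma wl_ide: "\<alpha> \<in> cells K f g \<Longrightarrow> f \<in> hom K A B \<Longrightarrow> wl K (ide K B) \<alpha> = \<alpha>"
  unfolding wl_def using hc_id_left[of \<alpha>] by (auto dest!: homD cellsD)

lemma wl_id2: "f \<in> hom K A B \<Longrightarrow> h \<in> hom K B C \<Longrightarrow> wl K h (id2 K f) = id2 K (cmp K h f)"
  unfolding wl_def by (rule hc_id2)

lemma wr_id2: "f \<in> hom K A B \<Longrightarrow> h \<in> hom K B C \<Longrightarrow> wr K (id2 K h) f = id2 K (cmp K h f)"
  unfolding wr_def by (rule hc_id2)

lemma nat2: "\<alpha> \<in> cells K f f' \<Longrightarrow> f \<in> hom K A B \<Longrightarrow> \<beta> \<in> cells K g g' \<Longrightarrow> g \<in> hom K B C \<Longrightarrow>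
   vc K (wr K \<beta> f') (wl K g \<alpha>) = vc K (wl K g' \<alpha>) (wr K \<beta> f)"
proof -
  assume a: "\<alpha> \<in> cells K f f'" "f \<in> hom K A B" "\<beta> \<in> cells K g g'" "g \<in> hom K B C"
  have f': "f' \<in> hom K A B" using a cells_hom by blast
  have g': "g' \<in> hom K B C" using a cells_hom by blast
  have "hc K \<beta> \<alpha> = hc K (vc K \<beta> (id2 K g)) (vc K (id2 K f') \<alpha>)"
    using a vc_id_left vc_id_right by simp
  also have "\<dots> = vc K (wr K \<beta> f') (wl K g \<alpha>)"
    unfolding wr_def wl_def
    by (rule interchange) (use a f' in \<open>auto intro: id2_cells' dest: homD\<close>)
  finally have 1: "hc K \<beta> \<alpha> = vc K (wr K \<beta> f') (wl K g \<alpha>)" .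
  have "hc K \<beta> \<alpha> = hc K (vc K (id2 K g') \<beta>) (vc K \<alpha> (id2 K f))"
    using a vc_id_left vc_id_right by simp
  also have "\<dots> = vc K (wl K g' \<alpha>) (wr K \<beta> f)"
    unfolding wr_def wl_def
    by (rule interchange) (use a g' in \<open>auto intro: id2_cells' dest: homD\<close>)
  finally show ?thesis using 1 by simp
qed


lemma abs_lift_lift:
  assumes "abs_left_lift K f h g \<phi>" "\<phi> \<in> cells K f (cmp K h g)" "g \<in> hom K A B" "h \<in> hom K B C"
  shows "left_lift K f h g \<phi>"
proof -
  have A: "A \<in> ob K" using assms(3) arr_src homD by blast
  have ia: "ide K A \<in> hom K A A" using ide_hom A by blast
  have hg: "cmp K h g \<in> hom K A C" using cmp_hom assms by blast
  have f: "f \<in> hom K A C" using cells_hom' assms(2) hg by blast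
  have "left_lift K (cmp K f (ide K A)) h (cmp K g (ide K A)) (wr K \<phi> (ide K A))"
    using assms(1) ia assms(3) unfolding abs_left_lift_def by (auto dest: homD)
  then show ?thesis using cmp_ide_right f assms(3) wr_ide[OF assms(2) f] by simp
qed

lemma pw_ext:
  assumes fc: "finitely_complete K" and g: "g \<in> hom K A B" and f: "f \<in> hom K A C"
    and h: "h \<in> hom K B C" and phi: "\<phi> \<in> cells K f (cmp K h g)"
    and pw: "pointwise_left_ext K f g h \<phi>"
  shows "left_ext K f g h \<phi>"
proof -
  have B: "B \<in> ob K" using g arr_trg homD by blast
  have A: "A \<in> ob K" using g arr_src homD by blast
  have iB: "ide K B \<in> hom K B B" using ide_hom B by blast
  have iA: "ide K A \<in> hom K A A" using ide_hom A by blast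
  obtain P p q lam where c: "is_comma K g (ide K B) P p q lam"
  proof -
    have "g \<in> arr K" "ide K B \<in> arr K" "trg K g = trg K (ide K B)" using g iB homD by auto
    then show ?thesis using fc that unfolding finitely_complete_def by blast
  qed
  have p: "p \<in> hom K P A" and q: "q \<in> hom K P B"
    using c g iB homD unfolding is_comma_def by metis+
  have lam: "lam \<in> cells K (cmp K g p) q"
    using c cmp_ide_left[OF q] unfolding is_comma_def by metis
  have idg: "id2 K g \<in> cells K (cmp K g (ide K A)) (cmp K (ide K B) g)"
    using id2_cells' g cmp_ide_left cmp_ide_right by auto
  obtain i where i: "i \<in> hom K A P" "cmp K p i = ide K A" "cmp K q i = g" "wr K lam i = id2 K g"
  proof -
    have u: "\<forall>X a c \<alpha>. a \<in> hom K X (src K g) \<longrightarrow> c \<in> hom K X (src K (ide K B)) \<longrightarrow>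
        \<alpha> \<in> cells K (cmp K g a) (cmp K (ide K B) c) \<longrightarrow>
        (\<exists>!u. u \<in> hom K X P \<and> cmp K p u = a \<and> cmp K q u = c \<and> wr K lam u = \<alpha>)"
      using c unfolding is_comma_def by blast
    have "src K g = A" "src K (ide K B) = B" using g iB homD by auto
    then have "\<exists>!u. u \<in> hom K A P \<and> cmp K p u = ide K A \<and> cmp K q u = g \<and> wr K lam u = id2 K g"
      using u iA g idg by simp
    then show ?thesis using that by blast
  qed
  have pwi: "left_ext K (cmp K f p) q (cmp K h (ide K B)) (vc K (wl K h lam) (wr K \<phi> p))"
  proof -
    have "ide K B \<in> hom K B (trg K g)" using iB g homD by auto
    then show ?thesis using pw c unfolding pointwise_left_ext_def by blast
  qed
  then have pwi: "left_ext K (cmp K f p) q h (vc K (wl K h lam) (wr K \<phi> p))"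
    using cmp_ide_right h by simp
  have fp: "cmp K f p \<in> hom K P C" using cmp_hom f p by blast
  show ?thesis unfolding left_ext_def
  proof
    fix k assume "k \<in> hom K (trg K g) (trg K f)"
    then have k: "k \<in> hom K B C" using g f by (auto dest: homD)
    have kg: "cmp K k g \<in> hom K A C" using cmp_hom k g by blast
    have hg: "cmp K h g \<in> hom K A C" using cmp_hom h g by blast
    have gp: "cmp K g p \<in> hom K P B" using cmp_hom g p by blast
    have as1: "cmp K (cmp K h g) p = cmp K h (cmp K g p)" using cmp_assoc p g h by simp
    have as2: "cmp K (cmp K k g) p = cmp K k (cmp K g p)" using cmp_assoc p g k by simp
    define Pm where "Pm = (\<lambda>\<kappa>. vc K (wr K \<kappa> q) (vc K (wl K h lam) (wr K \<phi> p)))"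
    define E where "E = (\<lambda>\<kappa>. vc K (wr K \<kappa> g) \<phi>)"
    define R where "R = (\<lambda>X. vc K (wl K k lam) (wr K X p))"
    have bP: "bij_betw Pm (cells K h k) (cells K (cmp K f p) (cmp K k q))"
      using pwi k q fp unfolding left_ext_def Pm_def by (auto dest: homD)
    have Ety: "E \<kappa> \<in> cells K f (cmp K k g)" if "\<kappa> \<in> cells K h k" for \<kappa>
      unfolding E_def using vc_cells[OF phi wr_cells[OF that h g]] .
    have Rty: "R X \<in> cells K (cmp K f p) (cmp K k q)" if "X \<in> cells K f (cmp K k g)" for X
    proof -
      have "wr K X p \<in> cells K (cmp K f p) (cmp K k (cmp K g p))"
        using wr_cells[OF that f p] as2 by simp
      moreover have "wl K k lam \<in> cells K (cmp K k (cmp K g p)) (cmp K k q)"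
        using wl_cells[OF lam gp k] .
      ultimately show ?thesis unfolding R_def by (rule vc_cells)
    qed
    have key1: "Pm \<kappa> = R (E \<kappa>)" if ka: "\<kappa> \<in> cells K h k" for \<kappa>
    proof -
      have t1: "wr K \<phi> p \<in> cells K (cmp K f p) (cmp K h (cmp K g p))"
        using wr_cells[OF phi f p] as1 by simp
      have t2: "wl K h lam \<in> cells K (cmp K h (cmp K g p)) (cmp K h q)"
        using wl_cells[OF lam gp h] .
      have t3: "wr K \<kappa> q \<in> cells K (cmp K h q) (cmp K k q)"
        using wr_cells[OF ka h q] .
      have t4: "wr K \<kappa> (cmp K g p) \<in> cells K (cmp K h (cmp K g p)) (cmp K k (cmp K g p))"
        using wr_cells[OF ka h gp] .
      have t5: "wl K k lam \<in> cells K (cmp K k (cmp K g p)) (cmp K k q)"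
        using wl_cells[OF lam gp k] .
      have "Pm \<kappa> = vc K (vc K (wr K \<kappa> q) (wl K h lam)) (wr K \<phi> p)"
        unfolding Pm_def using vc_assoc[OF t1 t2 t3] .
      also have "\<dots> = vc K (vc K (wl K k lam) (wr K \<kappa> (cmp K g p))) (wr K \<phi> p)"
        using nat2[OF lam gp ka h] by simp
      also have "\<dots> = vc K (wl K k lam) (vc K (wr K \<kappa> (cmp K g p)) (wr K \<phi> p))"
        using vc_assoc[OF t1 t4 t5] by simp
      also have "wr K \<kappa> (cmp K g p) = wr K (wr K \<kappa> g) p"
        using wr_wr[OF ka h g p] by simp
      also have "vc K (wr K (wr K \<kappa> g) p) (wr K \<phi> p) = wr K (E \<kappa>) p"
        unfolding E_def using wr_vc[OF phi wr_cells[OF ka h g] f p] by simp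
      finally show ?thesis unfolding R_def .
    qed
    have key2: "wr K (R X) i = X" if X: "X \<in> cells K f (cmp K k g)" for X
    proof -
      have t1: "wr K X p \<in> cells K (cmp K f p) (cmp K k (cmp K g p))"
        using wr_cells[OF X f p] as2 by simp
      have t2: "wl K k lam \<in> cells K (cmp K k (cmp K g p)) (cmp K k q)"
        using wl_cells[OF lam gp k] .
      have "wr K (R X) i = vc K (wr K (wl K k lam) i) (wr K (wr K X p) i)"
        unfolding R_def using wr_vc[OF t1 t2 fp i(1)] .
      also have "wr K (wl K k lam) i = wl K k (wr K lam i)"
        using wl_wr[OF lam gp i(1) k] by simp
      also have "\<dots> = id2 K (cmp K k g)" using i(4) wl_id2[OF g k] by simp
      also have "wr K (wr K X p) i = X"
        using wr_wr[OF X f p i(1)] i(2) wr_ide[OF X f] by simp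
      finally show ?thesis using vc_id_left[OF X] by simp
    qed
    show "bij_betw E (cells K h k) (cells K f (cmp K k g))"
      unfolding bij_betw_def
    proof
      show "inj_on E (cells K h k)"
      proof (rule inj_onI)
        fix x y assume "x \<in> cells K h k" "y \<in> cells K h k" "E x = E y"
        then have "Pm x = Pm y" using key1 by simp
        then show "x = y" using bP \<open>x \<in> cells K h k\<close> \<open>y \<in> cells K h k\<close>
          unfolding bij_betw_def inj_on_def by blast
      qed
      show "E ` cells K h k = cells K f (cmp K k g)"
      proof
        show "E ` cells K h k \<subseteq> cells K f (cmp K k g)" using Ety by blast
        show "cells K f (cmp K k g) \<subseteq> E ` cells K h k"
        proof
          fix X assume X: "X \<in> cells K f (cmp K k g)"
          then obtain \<kappa> where ka: "\<kappa> \<in> cells K h k" "Pm \<kappa> = R X"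
            using Rty bP unfolding bij_betw_def by (metis imageE)
          then have "E \<kappa> = X" using key1 key2[OF X] key2[OF Ety[OF ka(1)]] by metis
          then show "X \<in> E ` cells K h k" using ka by blast
        qed
      qed
    qed
  qed
qed

end



locale L310 = twocat K for K :: "('o,'a,'c,'m) twocat_data_scheme" +
  fixes Y :: "('o,'a,'c) yoneda_data" and A B C f g h \<phi> \<phi>'
  assumes fc: "finitely_complete K" and gy: "good_yoneda K Y"
    and aA: "adm_ob K Y A"
    and f: "f \<in> hom K A C" and fa: "f \<in> adm Y"
    and g: "g \<in> hom K A B" and ga: "g \<in> adm Y"
    and h: "h \<in> hom K B C"
    and phi: "\<phi> \<in> cells K f (cmp K h g)"
    and phi': "\<phi>' \<in> cells K (YF Y g) (cmp K (YF Y f) h)"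
    and eq: "vc K (wl K (YF Y f) \<phi>) (chi Y f) = vc K (wr K \<phi>' g) (chi Y g)"
begin

abbreviation "y \<equiv> yon Y A"
abbreviation "F \<equiv> YF Y f"
abbreviation "G \<equiv> YF Y g"
abbreviation "PA \<equiv> PP Y A"
abbreviation "xf \<equiv> chi Y f"
abbreviation "xg \<equiv> chi Y g"

lemma y: "y \<in> hom K A PA"
  using gy aA unfolding good_yoneda_def by blast

lemma F: "F \<in> hom K C PA" and xf: "xf \<in> cells K y (cmp K F f)"
  and absf: "abs_left_lift K y F f xf"
  using gy aA f fa unfolding good_yoneda_def by blast+

lemma G: "G \<in> hom K B PA" and xg: "xg \<in> cells K y (cmp K G g)"
  and absg: "abs_left_lift K y G g xg"
  using gy aA g ga unfolding good_yoneda_def by blast+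

lemma ax2: "k \<in> hom K B PA \<Longrightarrow> \<psi> \<in> cells K y (cmp K k g) \<Longrightarrow> abs_left_lift K y k g \<psi> \<Longrightarrow>
   pointwise_left_ext K y g k \<psi>"
  using gy aA g ga unfolding good_yoneda_def by blast

lemma pwg: "pointwise_left_ext K y g G xg"
  using ax2 G xg absg by blast

lemma extg: "left_ext K y g G xg"
  using pw_ext[OF fc g y G xg pwg] .

lemma liftf: "left_lift K y F f xf"
  using abs_lift_lift[OF absf xf f F] .

abbreviation "\<psi> \<equiv> vc K (wl K F \<phi>) xf"

lemma psi: "\<psi> \<in> cells K y (cmp K (cmp K F h) g)"
proof -
  have "wl K F \<phi> \<in> cells K (cmp K F f) (cmp K F (cmp K h g))"
    using wl_cells[OF phi f F] .
  then have "\<psi> \<in> cells K y (cmp K F (cmp K h g))" using vc_cells xf by blast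
  then show ?thesis using cmp_assoc[OF g h F] by simp
qed

lemma part1: "left_ext K f g h \<phi> \<longleftrightarrow> left_lift K G F h \<phi>'"
proof -
  have "bij_betw (\<lambda>\<kappa>. vc K (wr K \<kappa> g) \<phi>) (cells K h k) (cells K f (cmp K k g)) \<longleftrightarrow>
        bij_betw (\<lambda>\<kappa>. vc K (wl K F \<kappa>) \<phi>') (cells K h k) (cells K G (cmp K F k))"
    if k: "k \<in> hom K B C" for k
  proof -
    have kg: "cmp K k g \<in> hom K A C" using cmp_hom g k by blast
    have Fk: "cmp K F k \<in> hom K B PA" using cmp_hom F k by blast
    have as: "cmp K (cmp K F k) g = cmp K F (cmp K k g)" using cmp_assoc[OF g k F] by simp
    have bX: "bij_betw (\<lambda>\<alpha>. vc K (wr K \<alpha> g) xg) (cells K G (cmp K F k)) (cells K y (cmp K F (cmp K k g)))"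
    proof -
      have "hom K (trg K g) (trg K y) = hom K B PA" using g y homD by auto
      then show ?thesis using extg Fk as unfolding left_ext_def by metis
    qed
    have bT: "bij_betw (\<lambda>\<beta>. vc K (wl K F \<beta>) xf) (cells K f (cmp K k g)) (cells K y (cmp K F (cmp K k g)))"
      using liftf kg f unfolding left_lift_def by (auto dest: homD)
    have Lty: "vc K (wl K F \<kappa>) \<phi>' \<in> cells K G (cmp K F k)" if ka: "\<kappa> \<in> cells K h k" for \<kappa>
      using vc_cells[OF phi' wl_cells[OF ka h F]] .
    have Ety: "vc K (wr K \<kappa> g) \<phi> \<in> cells K f (cmp K k g)" if ka: "\<kappa> \<in> cells K h k" for \<kappa>
      using vc_cells[OF phi wr_cells[OF ka h g]] .
    have comm: "vc K (wr K (vc K (wl K F \<kappa>) \<phi>') g) xg = vc K (wl K F (vc K (wr K \<kappa> g) \<phi>)) xf"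
      if ka: "\<kappa> \<in> cells K h k" for \<kappa>
    proof -
      have Fh: "cmp K F h \<in> hom K B PA" using cmp_hom F h by blast
      have hg: "cmp K h g \<in> hom K A C" using cmp_hom h g by blast
      have Fhg: "cmp K (cmp K F h) g = cmp K F (cmp K h g)" using cmp_assoc[OF g h F] by simp
      have t1: "wl K F \<kappa> \<in> cells K (cmp K F h) (cmp K F k)" using wl_cells[OF ka h F] .
      have t2: "wr K \<phi>' g \<in> cells K (cmp K G g) (cmp K F (cmp K h g))"
        using wr_cells[OF phi' G g] Fhg by simp
      have t3: "wr K (wl K F \<kappa>) g \<in> cells K (cmp K F (cmp K h g)) (cmp K (cmp K F k) g)"
        using wr_cells[OF t1 Fh g] Fhg by simp
      have t4: "wl K F (wr K \<kappa> g) \<in> cells K (cmp K F (cmp K h g)) (cmp K F (cmp K k g))"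
        using wl_cells[OF wr_cells[OF ka h g] hg F] .
      have t5: "wl K F \<phi> \<in> cells K (cmp K F f) (cmp K F (cmp K h g))"
        using wl_cells[OF phi f F] .
      have "vc K (wr K (vc K (wl K F \<kappa>) \<phi>') g) xg = vc K (vc K (wr K (wl K F \<kappa>) g) (wr K \<phi>' g)) xg"
        using wr_vc[OF phi' t1 G g] by simp
      also have "\<dots> = vc K (wr K (wl K F \<kappa>) g) (vc K (wr K \<phi>' g) xg)"
        using vc_assoc[OF xg t2 t3] by simp
      also have "\<dots> = vc K (wl K F (wr K \<kappa> g)) (vc K (wl K F \<phi>) xf)"
        using eq wl_wr[OF ka h g F] by simp
      also have "\<dots> = vc K (vc K (wl K F (wr K \<kappa> g)) (wl K F \<phi>)) xf"
        using vc_assoc[OF xf t5 t4] by simp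
      also have "\<dots> = vc K (wl K F (vc K (wr K \<kappa> g) \<phi>)) xf"
        using wl_vc[OF phi wr_cells[OF ka h g] f F] by simp
      finally show ?thesis .
    qed
    show ?thesis
      by (rule bij_square[OF bX bT, symmetric]) (use Lty Ety comm in auto)
  qed
  moreover have "hom K (trg K g) (trg K f) = hom K B C" "hom K (src K h) (trg K h) = hom K B C"
    using f g h by (auto dest: homD)
  ultimately show ?thesis unfolding left_ext_def left_lift_def by simp
qed


lemma sq2:
  assumes c: "c \<in> hom K X B" and cm: "is_comma K g c P p q lam" and k: "k \<in> hom K X C"
  shows "bij_betw (\<lambda>\<kappa>. vc K (wl K F \<kappa>) (wr K \<phi>' c)) (cells K (cmp K h c) k) (cells K (cmp K G c) (cmp K F k))
     \<longleftrightarrow> bij_betw (\<lambda>\<kappa>. vc K (wr K \<kappa> q) (vc K (wl K h lam) (wr K \<phi> p))) (cells K (cmp K h c) k)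
           (cells K (cmp K f p) (cmp K k q))"
proof -
  have p: "p \<in> hom K P A" and q: "q \<in> hom K P X" and lam: "lam \<in> cells K (cmp K g p) (cmp K c q)"
    using cm g c homD unfolding is_comma_def by metis+
  have hc: "cmp K h c \<in> hom K X C" using cmp_hom c h by blast
  have cq: "cmp K c q \<in> hom K P B" using cmp_hom c q by blast
  have gp: "cmp K g p \<in> hom K P B" using cmp_hom g p by blast
  have fp: "cmp K f p \<in> hom K P C" using cmp_hom f p by blast
  have yp: "cmp K y p \<in> hom K P PA" using cmp_hom y p by blast
  have kq: "cmp K k q \<in> hom K P C" using cmp_hom k q by blast
  have hg: "cmp K h g \<in> hom K A C" using cmp_hom h g by blast
  have Fh: "cmp K F h \<in> hom K B PA" using cmp_hom F h by blast
  have Fk: "cmp K F k \<in> hom K X PA" using cmp_hom F k by blast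
  have Gc: "cmp K G c \<in> hom K X PA" using cmp_hom G c by blast
  have Ff: "cmp K F f \<in> hom K A PA" using cmp_hom F f by blast
  have Fhc: "cmp K F (cmp K h c) \<in> hom K X PA" using cmp_hom F hc by blast
  have Fhg: "cmp K F (cmp K h g) \<in> hom K A PA" using cmp_hom F hg by blast
  note AS = cmp_assoc[OF q hc F] cmp_assoc[OF q c h] cmp_assoc[OF q k F] cmp_assoc[OF gp h F]
    cmp_assoc[OF cq h F] cmp_assoc[OF p f F] cmp_assoc[OF p hg F] cmp_assoc[OF p g h]
    cmp_assoc[OF c h F] cmp_assoc[OF q c G] cmp_assoc[OF p g G] cmp_assoc[OF g h F]
  have bX: "bij_betw (\<lambda>\<alpha>. vc K (wr K \<alpha> q) (vc K (wl K G lam) (wr K xg p)))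
      (cells K (cmp K G c) (cmp K F k)) (cells K (cmp K y p) (cmp K F (cmp K k q)))"
  proof -
    have "c \<in> hom K X (trg K g)" using c g homD by auto
    then have "left_ext K (cmp K y p) q (cmp K G c) (vc K (wl K G lam) (wr K xg p))"
      using pwg cm unfolding pointwise_left_ext_def by blast
    moreover have "hom K (trg K q) (trg K (cmp K y p)) = hom K X PA" using q yp homD by auto
    ultimately show ?thesis using Fk AS unfolding left_ext_def by metis
  qed
  have bT: "bij_betw (\<lambda>\<beta>. vc K (wl K F \<beta>) (wr K xf p))
      (cells K (cmp K f p) (cmp K k q)) (cells K (cmp K y p) (cmp K F (cmp K k q)))"
  proof -
    have "p \<in> hom K P (src K f)" using p f homD by auto
    then have "left_lift K (cmp K y p) F (cmp K f p) (wr K xf p)"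
      using absf unfolding abs_left_lift_def by blast
    moreover have "hom K (src K (cmp K f p)) (trg K (cmp K f p)) = hom K P C" using fp homD by auto
    ultimately show ?thesis using kq unfolding left_lift_def by blast
  qed
  have Lty: "vc K (wl K F \<kappa>) (wr K \<phi>' c) \<in> cells K (cmp K G c) (cmp K F k)"
    if ka: "\<kappa> \<in> cells K (cmp K h c) k" for \<kappa>
  proof -
    have "wr K \<phi>' c \<in> cells K (cmp K G c) (cmp K F (cmp K h c))"
      using wr_cells[OF phi' G c] AS by simp
    then show ?thesis using vc_cells wl_cells[OF ka hc F] by blast
  qed
  have Pty: "vc K (wr K \<kappa> q) (vc K (wl K h lam) (wr K \<phi> p)) \<in> cells K (cmp K f p) (cmp K k q)"
    if ka: "\<kappa> \<in> cells K (cmp K h c) k" for \<kappa>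
  proof -
    have "wr K \<phi> p \<in> cells K (cmp K f p) (cmp K h (cmp K g p))"
      using wr_cells[OF phi f p] AS by simp
    moreover have "wl K h lam \<in> cells K (cmp K h (cmp K g p)) (cmp K h (cmp K c q))"
      using wl_cells[OF lam gp h] .
    moreover have "wr K \<kappa> q \<in> cells K (cmp K h (cmp K c q)) (cmp K k q)"
      using wr_cells[OF ka hc q] AS by simp
    ultimately show ?thesis using vc_cells by blast
  qed
  have comm: "vc K (wr K (vc K (wl K F \<kappa>) (wr K \<phi>' c)) q) (vc K (wl K G lam) (wr K xg p)) =
     vc K (wl K F (vc K (wr K \<kappa> q) (vc K (wl K h lam) (wr K \<phi> p)))) (wr K xf p)"
    if ka: "\<kappa> \<in> cells K (cmp K h c) k" for \<kappa>
  proof -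
    have T_wlFk: "wl K F \<kappa> \<in> cells K (cmp K F (cmp K h c)) (cmp K F k)" using wl_cells[OF ka hc F] .
    have T_a: "wr K (wl K F \<kappa>) q \<in> cells K (cmp K F (cmp K h (cmp K c q))) (cmp K F (cmp K k q))"
      using wr_cells[OF T_wlFk Fhc q] AS by simp
    have T_b: "wl K (cmp K F h) lam \<in> cells K (cmp K F (cmp K h (cmp K g p))) (cmp K F (cmp K h (cmp K c q)))"
      using wl_cells[OF lam gp Fh] AS by simp
    have T_wlFphi: "wl K F \<phi> \<in> cells K (cmp K F f) (cmp K F (cmp K h g))" using wl_cells[OF phi f F] .
    have T_c: "wr K (wl K F \<phi>) p \<in> cells K (cmp K F (cmp K f p)) (cmp K F (cmp K h (cmp K g p)))"
      using wr_cells[OF T_wlFphi Ff p] AS by simp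
    have T_d: "wr K xf p \<in> cells K (cmp K y p) (cmp K F (cmp K f p))"
      using wr_cells[OF xf y p] AS by simp
    have T_e: "wr K \<phi>' (cmp K c q) \<in> cells K (cmp K G (cmp K c q)) (cmp K F (cmp K h (cmp K c q)))"
      using wr_cells[OF phi' G cq] AS by simp
    have T_f: "wl K G lam \<in> cells K (cmp K G (cmp K g p)) (cmp K G (cmp K c q))"
      using wl_cells[OF lam gp G] .
    have T_g: "wr K xg p \<in> cells K (cmp K y p) (cmp K G (cmp K g p))"
      using wr_cells[OF xg y p] AS by simp
    have T_h: "wr K \<phi>' (cmp K g p) \<in> cells K (cmp K G (cmp K g p)) (cmp K F (cmp K h (cmp K g p)))"
      using wr_cells[OF phi' G gp] AS by simp
    have T_wrphi'c: "wr K \<phi>' c \<in> cells K (cmp K G c) (cmp K F (cmp K h c))"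
      using wr_cells[OF phi' G c] AS by simp
    have T_wrphi'g: "wr K \<phi>' g \<in> cells K (cmp K G g) (cmp K F (cmp K h g))"
      using wr_cells[OF phi' G g] AS by simp
    have T_kq: "wr K \<kappa> q \<in> cells K (cmp K h (cmp K c q)) (cmp K k q)"
      using wr_cells[OF ka hc q] AS by simp
    have T_hlam: "wl K h lam \<in> cells K (cmp K h (cmp K g p)) (cmp K h (cmp K c q))"
      using wl_cells[OF lam gp h] .
    have T_phip: "wr K \<phi> p \<in> cells K (cmp K f p) (cmp K h (cmp K g p))"
      using wr_cells[OF phi f p] AS by simp
    have T_ef: "vc K (wl K G lam) (wr K xg p) \<in> cells K (cmp K y p) (cmp K G (cmp K c q))"
      using vc_cells[OF T_g T_f] .
    have T_hp: "vc K (wl K h lam) (wr K \<phi> p) \<in> cells K (cmp K f p) (cmp K h (cmp K c q))"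
      using vc_cells[OF T_phip T_hlam] .
    have "vc K (wr K (vc K (wl K F \<kappa>) (wr K \<phi>' c)) q) (vc K (wl K G lam) (wr K xg p))
        = vc K (vc K (wr K (wl K F \<kappa>) q) (wr K \<phi>' (cmp K c q))) (vc K (wl K G lam) (wr K xg p))"
      using wr_vc[OF T_wrphi'c T_wlFk Gc q] wr_wr[OF phi' G c q] by simp
    also have "\<dots> = vc K (wr K (wl K F \<kappa>) q) (vc K (wr K \<phi>' (cmp K c q)) (vc K (wl K G lam) (wr K xg p)))"
      using vc_assoc[OF T_ef T_e T_a] by simp
    also have "vc K (wr K \<phi>' (cmp K c q)) (vc K (wl K G lam) (wr K xg p))
        = vc K (vc K (wr K \<phi>' (cmp K c q)) (wl K G lam)) (wr K xg p)"
      using vc_assoc[OF T_g T_f T_e] by simp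
    also have "vc K (wr K \<phi>' (cmp K c q)) (wl K G lam) = vc K (wl K (cmp K F h) lam) (wr K \<phi>' (cmp K g p))"
      using nat2[OF lam gp phi' G] by simp
    also have "vc K (vc K (wl K (cmp K F h) lam) (wr K \<phi>' (cmp K g p))) (wr K xg p)
        = vc K (wl K (cmp K F h) lam) (vc K (wr K \<phi>' (cmp K g p)) (wr K xg p))"
      using vc_assoc[OF T_g T_h T_b] by simp
    also have "vc K (wr K \<phi>' (cmp K g p)) (wr K xg p) = wr K (vc K (wl K F \<phi>) xf) p"
      using wr_wr[OF phi' G g p] wr_vc[OF xg T_wrphi'g y p] eq by simp
    also have "\<dots> = vc K (wr K (wl K F \<phi>) p) (wr K xf p)"
      using wr_vc[OF xf T_wlFphi y p] by simp
    finally have L: "vc K (wr K (vc K (wl K F \<kappa>) (wr K \<phi>' c)) q) (vc K (wl K G lam) (wr K xg p))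
      = vc K (wr K (wl K F \<kappa>) q) (vc K (wl K (cmp K F h) lam) (vc K (wr K (wl K F \<phi>) p) (wr K xf p)))" .
    have "vc K (wl K F (vc K (wr K \<kappa> q) (vc K (wl K h lam) (wr K \<phi> p)))) (wr K xf p)
       = vc K (vc K (wl K F (wr K \<kappa> q)) (vc K (wl K F (wl K h lam)) (wl K F (wr K \<phi> p)))) (wr K xf p)"
      using wl_vc[OF T_hp T_kq fp F] wl_vc[OF T_phip T_hlam fp F] by simp
    also have "\<dots> = vc K (vc K (wr K (wl K F \<kappa>) q) (vc K (wl K (cmp K F h) lam) (wr K (wl K F \<phi>) p))) (wr K xf p)"
      using wl_wr[OF ka hc q F] wl_wl[OF lam gp h F] wl_wr[OF phi f p F] by simp
    also have "\<dots> = vc K (wr K (wl K F \<kappa>) q) (vc K (vc K (wl K (cmp K F h) lam) (wr K (wl K F \<phi>) p)) (wr K xf p))"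
      using vc_assoc[OF T_d vc_cells[OF T_c T_b] T_a] by simp
    also have "\<dots> = vc K (wr K (wl K F \<kappa>) q) (vc K (wl K (cmp K F h) lam) (vc K (wr K (wl K F \<phi>) p) (wr K xf p)))"
      using vc_assoc[OF T_d T_c T_b] by simp
    finally show ?thesis using L by simp
  qed
  show ?thesis
    by (rule bij_square[OF bX bT]) (use Lty Pty comm in auto)
qed


lemma part2: "pointwise_left_ext K f g h \<phi> \<longleftrightarrow> abs_left_lift K G F h \<phi>'"
proof
  assume pw: "pointwise_left_ext K f g h \<phi>"
  show "abs_left_lift K G F h \<phi>'" unfolding abs_left_lift_def
  proof (intro allI ballI)
    fix D j assume "j \<in> hom K D (src K h)"
    then have j: "j \<in> hom K D B" using h homD by auto
    obtain P p q lam where cm: "is_comma K g j P p q lam"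
    proof -
      have "g \<in> arr K" "j \<in> arr K" "trg K g = trg K j" using g j homD by auto
      then show ?thesis using fc that unfolding finitely_complete_def by blast
    qed
    have hj: "cmp K h j \<in> hom K D C" using cmp_hom j h by blast
    have q: "q \<in> hom K P D" and p: "p \<in> hom K P A"
      using cm g j homD unfolding is_comma_def by metis+
    have fp: "cmp K f p \<in> hom K P C" using cmp_hom f p by blast
    have "j \<in> hom K D (trg K g)" using j g homD by auto
    then have le: "left_ext K (cmp K f p) q (cmp K h j) (vc K (wl K h lam) (wr K \<phi> p))"
      using pw cm unfolding pointwise_left_ext_def by blast
    show "left_lift K (cmp K G j) F (cmp K h j) (wr K \<phi>' j)" unfolding left_lift_def
    proof
      fix k assume "k \<in> hom K (src K (cmp K h j)) (trg K (cmp K h j))"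
      then have k: "k \<in> hom K D C" using hj homD by auto
      moreover have "hom K (trg K q) (trg K (cmp K f p)) = hom K D C" using q fp homD by auto
      ultimately have "bij_betw (\<lambda>\<kappa>. vc K (wr K \<kappa> q) (vc K (wl K h lam) (wr K \<phi> p))) (cells K (cmp K h j) k)
           (cells K (cmp K f p) (cmp K k q))" using le unfolding left_ext_def by blast
      then show "bij_betw (\<lambda>\<kappa>. vc K (wl K F \<kappa>) (wr K \<phi>' j)) (cells K (cmp K h j) k) (cells K (cmp K G j) (cmp K F k))"
        using sq2[OF j cm k] by blast
    qed
  qed
next
  assume al: "abs_left_lift K G F h \<phi>'"
  show "pointwise_left_ext K f g h \<phi>" unfolding pointwise_left_ext_def
  proof (intro allI impI)
    fix X c P p q lam assume c0: "c \<in> hom K X (trg K g)" and cm: "is_comma K g c P p q lam"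
    then have c: "c \<in> hom K X B" using g homD by auto
    have hc: "cmp K h c \<in> hom K X C" using cmp_hom c h by blast
    have q: "q \<in> hom K P X" and p: "p \<in> hom K P A"
      using cm g c homD unfolding is_comma_def by metis+
    have fp: "cmp K f p \<in> hom K P C" using cmp_hom f p by blast
    have "c \<in> hom K X (src K h)" using c h homD by auto
    then have ll: "left_lift K (cmp K G c) F (cmp K h c) (wr K \<phi>' c)"
      using al unfolding abs_left_lift_def by blast
    show "left_ext K (cmp K f p) q (cmp K h c) (vc K (wl K h lam) (wr K \<phi> p))" unfolding left_ext_def
    proof
      fix k assume "k \<in> hom K (trg K q) (trg K (cmp K f p))"
      then have k: "k \<in> hom K X C" using q fp homD by auto
      moreover have "hom K (src K (cmp K h c)) (trg K (cmp K h c)) = hom K X C" using hc homD by auto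
      ultimately have "bij_betw (\<lambda>\<kappa>. vc K (wl K F \<kappa>) (wr K \<phi>' c)) (cells K (cmp K h c) k) (cells K (cmp K G c) (cmp K F k))"
        using ll unfolding left_lift_def by blast
      then show "bij_betw (\<lambda>\<kappa>. vc K (wr K \<kappa> q) (vc K (wl K h lam) (wr K \<phi> p))) (cells K (cmp K h c) k)
           (cells K (cmp K f p) (cmp K k q))"
        using sq2[OF c cm k] by blast
    qed
  qed
qed


lemma comp3:
  assumes j: "j \<in> hom K D A" and k: "k \<in> hom K D B" and ka: "\<kappa> \<in> cells K (cmp K g j) k"
  shows "vc K (wl K F (vc K (wl K h \<kappa>) (wr K \<phi> j))) (wr K xf j) = vc K (wl K (cmp K F h) \<kappa>) (wr K \<psi> j)"
    and "vc K (wr K \<phi>' k) (vc K (wl K G \<kappa>) (wr K xg j)) = vc K (wl K (cmp K F h) \<kappa>) (wr K \<psi> j)"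
proof -
  have gj: "cmp K g j \<in> hom K D B" using cmp_hom g j by blast
  have fj: "cmp K f j \<in> hom K D C" using cmp_hom f j by blast
  have hk: "cmp K h k \<in> hom K D C" using cmp_hom h k by blast
  have Fh: "cmp K F h \<in> hom K B PA" using cmp_hom F h by blast
  have Ff: "cmp K F f \<in> hom K A PA" using cmp_hom F f by blast
  note AS = cmp_assoc[OF j g h] cmp_assoc[OF gj h F] cmp_assoc[OF k h F] cmp_assoc[OF j f F]
    cmp_assoc[OF j g G]
  have T1: "wl K h \<kappa> \<in> cells K (cmp K h (cmp K g j)) (cmp K h k)" using wl_cells[OF ka gj h] .
  have T2: "wr K \<phi> j \<in> cells K (cmp K f j) (cmp K h (cmp K g j))" using wr_cells[OF phi f j] AS by simp
  have T3: "wr K xf j \<in> cells K (cmp K y j) (cmp K F (cmp K f j))" using wr_cells[OF xf y j] AS by simp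
  have T_wlFphi: "wl K F \<phi> \<in> cells K (cmp K F f) (cmp K F (cmp K h g))" using wl_cells[OF phi f F] .
  have T4: "wl K (cmp K F h) \<kappa> \<in> cells K (cmp K F (cmp K h (cmp K g j))) (cmp K F (cmp K h k))"
    using wl_cells[OF ka gj Fh] AS by simp
  have T5: "wr K (wl K F \<phi>) j \<in> cells K (cmp K F (cmp K f j)) (cmp K F (cmp K h (cmp K g j)))"
    using wr_cells[OF T_wlFphi Ff j] AS cmp_assoc[OF g h F] cmp_assoc[OF j g Fh] by simp
  have "vc K (wl K F (vc K (wl K h \<kappa>) (wr K \<phi> j))) (wr K xf j)
      = vc K (vc K (wl K (cmp K F h) \<kappa>) (wr K (wl K F \<phi>) j)) (wr K xf j)"
    using wl_vc[OF T2 T1 fj F] wl_wl[OF ka gj h F] wl_wr[OF phi f j F] by simp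
  also have "\<dots> = vc K (wl K (cmp K F h) \<kappa>) (vc K (wr K (wl K F \<phi>) j) (wr K xf j))"
    using vc_assoc[OF T3 T5 T4] by simp
  also have "\<dots> = vc K (wl K (cmp K F h) \<kappa>) (wr K \<psi> j)"
    using wr_vc[OF xf T_wlFphi y j] by simp
  finally show "vc K (wl K F (vc K (wl K h \<kappa>) (wr K \<phi> j))) (wr K xf j) = vc K (wl K (cmp K F h) \<kappa>) (wr K \<psi> j)" .
  have T6: "wr K \<phi>' k \<in> cells K (cmp K G k) (cmp K F (cmp K h k))" using wr_cells[OF phi' G k] AS by simp
  have T7: "wl K G \<kappa> \<in> cells K (cmp K G (cmp K g j)) (cmp K G k)" using wl_cells[OF ka gj G] .
  have T8: "wr K xg j \<in> cells K (cmp K y j) (cmp K G (cmp K g j))" using wr_cells[OF xg y j] AS by simp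
  have T9: "wr K \<phi>' (cmp K g j) \<in> cells K (cmp K G (cmp K g j)) (cmp K F (cmp K h (cmp K g j)))"
    using wr_cells[OF phi' G gj] AS by simp
  have T_wrphi'g: "wr K \<phi>' g \<in> cells K (cmp K G g) (cmp K (cmp K F h) g)" using wr_cells[OF phi' G g] .
  have "vc K (wr K \<phi>' k) (vc K (wl K G \<kappa>) (wr K xg j)) = vc K (vc K (wr K \<phi>' k) (wl K G \<kappa>)) (wr K xg j)"
    using vc_assoc[OF T8 T7 T6] by simp
  also have "\<dots> = vc K (vc K (wl K (cmp K F h) \<kappa>) (wr K \<phi>' (cmp K g j))) (wr K xg j)"
    using nat2[OF ka gj phi' G] by simp
  also have "\<dots> = vc K (wl K (cmp K F h) \<kappa>) (vc K (wr K \<phi>' (cmp K g j)) (wr K xg j))"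
    using vc_assoc[OF T8 T9 T4] by simp
  also have "vc K (wr K \<phi>' (cmp K g j)) (wr K xg j) = wr K \<psi> j"
    using wr_wr[OF phi' G g j] wr_vc[OF xg T_wrphi'g y j] eq by simp
  finally show "vc K (wr K \<phi>' k) (vc K (wl K G \<kappa>) (wr K xg j)) = vc K (wl K (cmp K F h) \<kappa>) (wr K \<psi> j)" .
qed

lemma part3: "abs_left_lift K f h g \<phi> \<longleftrightarrow> iso2 K \<phi>'"
proof
  assume ab: "abs_left_lift K f h g \<phi>"
  have Fh: "cmp K F h \<in> hom K B PA" using cmp_hom F h by blast
  have abpsi: "abs_left_lift K y (cmp K F h) g \<psi>" unfolding abs_left_lift_def
  proof (intro allI ballI)
    fix D j assume "j \<in> hom K D (src K g)"
    then have j: "j \<in> hom K D A" using g homD by auto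
    have gj: "cmp K g j \<in> hom K D B" using cmp_hom g j by blast
    have fj: "cmp K f j \<in> hom K D C" using cmp_hom f j by blast
    show "left_lift K (cmp K y j) (cmp K F h) (cmp K g j) (wr K \<psi> j)" unfolding left_lift_def
    proof
      fix k assume "k \<in> hom K (src K (cmp K g j)) (trg K (cmp K g j))"
      then have k: "k \<in> hom K D B" using gj homD by auto
      have hk: "cmp K h k \<in> hom K D C" using cmp_hom h k by blast
      have "j \<in> hom K D (src K g)" using j g homD by auto
      then have "left_lift K (cmp K f j) h (cmp K g j) (wr K \<phi> j)" using ab unfolding abs_left_lift_def by blast
      then have bM: "bij_betw (\<lambda>\<kappa>. vc K (wl K h \<kappa>) (wr K \<phi> j)) (cells K (cmp K g j) k) (cells K (cmp K f j) (cmp K h k))"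
        using k gj homD unfolding left_lift_def by metis
      have "j \<in> hom K D (src K f)" using j f homD by auto
      then have "left_lift K (cmp K y j) F (cmp K f j) (wr K xf j)" using absf unfolding abs_left_lift_def by blast
      then have bT: "bij_betw (\<lambda>\<beta>. vc K (wl K F \<beta>) (wr K xf j)) (cells K (cmp K f j) (cmp K h k)) (cells K (cmp K y j) (cmp K F (cmp K h k)))"
        using hk fj homD unfolding left_lift_def by metis
      have "bij_betw ((\<lambda>\<beta>. vc K (wl K F \<beta>) (wr K xf j)) \<circ> (\<lambda>\<kappa>. vc K (wl K h \<kappa>) (wr K \<phi> j)))
          (cells K (cmp K g j) k) (cells K (cmp K y j) (cmp K F (cmp K h k)))"
        using bij_betw_trans[OF bM bT] .
      then have "bij_betw (\<lambda>\<kappa>. vc K (wl K (cmp K F h) \<kappa>) (wr K \<psi> j))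
          (cells K (cmp K g j) k) (cells K (cmp K y j) (cmp K F (cmp K h k)))"
        by (rule bij_betw_cong[THEN iffD1, rotated]) (use comp3(1)[OF j k] in simp)
      then show "bij_betw (\<lambda>\<kappa>. vc K (wl K (cmp K F h) \<kappa>) (wr K \<psi> j))
          (cells K (cmp K g j) k) (cells K (cmp K y j) (cmp K (cmp K F h) k))"
        using cmp_assoc[OF k h F] by simp
    qed
  qed
  have extpsi: "left_ext K y g (cmp K F h) \<psi>"
    using pw_ext[OF fc g y Fh psi ax2[OF Fh psi abpsi]] .
  have hB: "hom K (trg K g) (trg K y) = hom K B PA" using g y homD by auto
  have e1: "bij_betw (\<lambda>\<theta>. vc K (wr K \<theta> g) \<psi>) (cells K (cmp K F h) G) (cells K y (cmp K G g))"
    using extpsi G hB unfolding left_ext_def by metis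
  have e2: "bij_betw (\<lambda>\<theta>. vc K (wr K \<theta> g) \<psi>) (cells K (cmp K F h) (cmp K F h)) (cells K y (cmp K (cmp K F h) g))"
    using extpsi Fh hB unfolding left_ext_def by metis
  have e3: "bij_betw (\<lambda>\<theta>. vc K (wr K \<theta> g) xg) (cells K G G) (cells K y (cmp K G g))"
    using extg G hB unfolding left_ext_def by metis
  obtain \<theta> where th: "\<theta> \<in> cells K (cmp K F h) G" "vc K (wr K \<theta> g) \<psi> = xg"
  proof -
    have "xg \<in> (\<lambda>\<theta>. vc K (wr K \<theta> g) \<psi>) ` cells K (cmp K F h) G" using e1 xg by (simp add: bij_betw_def)
    then obtain t where "t \<in> cells K (cmp K F h) G" "xg = vc K (wr K t g) \<psi>" by (rule imageE)
    then show ?thesis using that by simp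
  qed
  have T1: "wr K \<theta> g \<in> cells K (cmp K (cmp K F h) g) (cmp K G g)" using wr_cells[OF th(1) Fh g] .
  have T2: "wr K \<phi>' g \<in> cells K (cmp K G g) (cmp K (cmp K F h) g)" using wr_cells[OF phi' G g] .
  have c1: "vc K \<theta> \<phi>' \<in> cells K G G" using vc_cells[OF phi' th(1)] .
  have c2: "vc K \<phi>' \<theta> \<in> cells K (cmp K F h) (cmp K F h)" using vc_cells[OF th(1) phi'] .
  have "vc K (wr K (vc K \<theta> \<phi>') g) xg = vc K (wr K \<theta> g) (vc K (wr K \<phi>' g) xg)"
    using wr_vc[OF phi' th(1) G g] vc_assoc[OF xg T2 T1] by simp
  also have "\<dots> = xg" using eq th(2) by simp
  also have "\<dots> = vc K (wr K (id2 K G) g) xg" using wr_id2[OF g G] vc_id_left[OF xg] by simp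
  finally have i1: "vc K \<theta> \<phi>' = id2 K G"
    using inj_onD[OF bij_betw_imp_inj_on[OF e3] _ c1 id2_cells'[OF G]] by simp
  have "vc K (wr K (vc K \<phi>' \<theta>) g) \<psi> = vc K (wr K \<phi>' g) (vc K (wr K \<theta> g) \<psi>)"
    using wr_vc[OF th(1) phi' Fh g] vc_assoc[OF psi T1 T2] by simp
  also have "\<dots> = \<psi>" using eq th(2) by simp
  also have "\<dots> = vc K (wr K (id2 K (cmp K F h)) g) \<psi>" using wr_id2[OF g Fh] vc_id_left[OF psi] by simp
  finally have i2: "vc K \<phi>' \<theta> = id2 K (cmp K F h)"
    using inj_onD[OF bij_betw_imp_inj_on[OF e2] _ c2 id2_cells'[OF Fh]] by simp
  have "\<phi>' \<in> cell K" "dom2 K \<phi>' = G" "cod2 K \<phi>' = cmp K F h" using cellsD[OF phi'] by auto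
  then show "iso2 K \<phi>'" unfolding iso2_def using th(1) i1 i2 by auto
next
  assume "iso2 K \<phi>'"
  then obtain \<theta> where th: "\<theta> \<in> cells K (cmp K F h) G" "vc K \<theta> \<phi>' = id2 K G" "vc K \<phi>' \<theta> = id2 K (cmp K F h)"
  proof -
    have "dom2 K \<phi>' = G" "cod2 K \<phi>' = cmp K F h" using cellsD[OF phi'] by auto
    then show ?thesis using \<open>iso2 K \<phi>'\<close> that unfolding iso2_def by auto
  qed
  have Fh: "cmp K F h \<in> hom K B PA" using cmp_hom F h by blast
  show "abs_left_lift K f h g \<phi>" unfolding abs_left_lift_def
  proof (intro allI ballI)
    fix D j assume "j \<in> hom K D (src K g)"
    then have j: "j \<in> hom K D A" using g homD by auto
    have gj: "cmp K g j \<in> hom K D B" using cmp_hom g j by blast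
    have fj: "cmp K f j \<in> hom K D C" using cmp_hom f j by blast
    have yj: "cmp K y j \<in> hom K D PA" using cmp_hom y j by blast
    show "left_lift K (cmp K f j) h (cmp K g j) (wr K \<phi> j)" unfolding left_lift_def
    proof
      fix k assume "k \<in> hom K (src K (cmp K g j)) (trg K (cmp K g j))"
      then have k: "k \<in> hom K D B" using gj homD by auto
      have hk: "cmp K h k \<in> hom K D C" using cmp_hom h k by blast
      have Gk: "cmp K G k \<in> hom K D PA" using cmp_hom G k by blast
      have as: "cmp K (cmp K F h) k = cmp K F (cmp K h k)" using cmp_assoc[OF k h F] by simp
      have "j \<in> hom K D (src K f)" using j f homD by auto
      then have "left_lift K (cmp K y j) F (cmp K f j) (wr K xf j)" using absf unfolding abs_left_lift_def by blast
      then have bT: "bij_betw (\<lambda>\<beta>. vc K (wl K F \<beta>) (wr K xf j)) (cells K (cmp K f j) (cmp K h k)) (cells K (cmp K y j) (cmp K F (cmp K h k)))"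
        using hk fj homD unfolding left_lift_def by metis
      have "j \<in> hom K D (src K g)" using j g homD by auto
      then have "left_lift K (cmp K y j) G (cmp K g j) (wr K xg j)" using absg unfolding abs_left_lift_def by blast
      then have bG: "bij_betw (\<lambda>\<kappa>. vc K (wl K G \<kappa>) (wr K xg j)) (cells K (cmp K g j) k) (cells K (cmp K y j) (cmp K G k))"
        using k gj homD unfolding left_lift_def by metis
      have Tp: "wr K \<phi>' k \<in> cells K (cmp K G k) (cmp K F (cmp K h k))" using wr_cells[OF phi' G k] as by simp
      have Tt: "wr K \<theta> k \<in> cells K (cmp K F (cmp K h k)) (cmp K G k)" using wr_cells[OF th(1) Fh k] as by simp
      have bPhi: "bij_betw (\<lambda>\<alpha>. vc K (wr K \<phi>' k) \<alpha>) (cells K (cmp K y j) (cmp K G k)) (cells K (cmp K y j) (cmp K F (cmp K h k)))"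
      proof (rule bij_betw_byWitness[where f'="\<lambda>\<alpha>. vc K (wr K \<theta> k) \<alpha>"])
        show "\<forall>a\<in>cells K (cmp K y j) (cmp K G k). vc K (wr K \<theta> k) (vc K (wr K \<phi>' k) a) = a"
        proof
          fix a assume a: "a \<in> cells K (cmp K y j) (cmp K G k)"
          have "vc K (wr K \<theta> k) (vc K (wr K \<phi>' k) a) = vc K (wr K (vc K \<theta> \<phi>') k) a"
            using vc_assoc[OF a Tp Tt] wr_vc[OF phi' th(1) G k] by simp
          also have "\<dots> = a" using th(2) wr_id2[OF k G] vc_id_left[OF a] by simp
          finally show "vc K (wr K \<theta> k) (vc K (wr K \<phi>' k) a) = a" .
        qed
        show "\<forall>a\<in>cells K (cmp K y j) (cmp K F (cmp K h k)). vc K (wr K \<phi>' k) (vc K (wr K \<theta> k) a) = a"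
        proof
          fix a assume a: "a \<in> cells K (cmp K y j) (cmp K F (cmp K h k))"
          have "vc K (wr K \<phi>' k) (vc K (wr K \<theta> k) a) = vc K (wr K (vc K \<phi>' \<theta>) k) a"
            using vc_assoc[OF a Tt Tp] wr_vc[OF th(1) phi' Fh k] by simp
          also have "\<dots> = a" using th(3) wr_id2[OF k Fh] vc_id_left[OF a] as by simp
          finally show "vc K (wr K \<phi>' k) (vc K (wr K \<theta> k) a) = a" .
        qed
        show "(\<lambda>\<alpha>. vc K (wr K \<phi>' k) \<alpha>) ` cells K (cmp K y j) (cmp K G k) \<subseteq> cells K (cmp K y j) (cmp K F (cmp K h k))"
          using vc_cells Tp by blast
        show "(\<lambda>\<alpha>. vc K (wr K \<theta> k) \<alpha>) ` cells K (cmp K y j) (cmp K F (cmp K h k)) \<subseteq> cells K (cmp K y j) (cmp K G k)"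
          using vc_cells Tt by blast
      qed
      have bE: "bij_betw (\<lambda>\<kappa>. vc K (wr K \<phi>' k) (vc K (wl K G \<kappa>) (wr K xg j))) (cells K (cmp K g j) k)
          (cells K (cmp K y j) (cmp K F (cmp K h k)))"
        using bij_betw_trans[OF bG bPhi] by (simp add: comp_def)
      have Mty: "vc K (wl K h \<kappa>) (wr K \<phi> j) \<in> cells K (cmp K f j) (cmp K h k)" if ka: "\<kappa> \<in> cells K (cmp K g j) k" for \<kappa>
      proof -
        have "wr K \<phi> j \<in> cells K (cmp K f j) (cmp K h (cmp K g j))" using wr_cells[OF phi f j] cmp_assoc[OF j g h] by simp
        then show ?thesis using vc_cells wl_cells[OF ka gj h] by blast
      qed
      have Ety: "vc K (wr K \<phi>' k) (vc K (wl K G \<kappa>) (wr K xg j)) \<in> cells K (cmp K y j) (cmp K F (cmp K h k))"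
        if ka: "\<kappa> \<in> cells K (cmp K g j) k" for \<kappa>
        using bE ka unfolding bij_betw_def by blast
      have "bij_betw (\<lambda>\<kappa>. vc K (wl K h \<kappa>) (wr K \<phi> j)) (cells K (cmp K g j) k) (cells K (cmp K f j) (cmp K h k))
         \<longleftrightarrow> bij_betw (\<lambda>\<kappa>. vc K (wr K \<phi>' k) (vc K (wl K G \<kappa>) (wr K xg j))) (cells K (cmp K g j) k)
          (cells K (cmp K y j) (cmp K F (cmp K h k)))"
        by (rule bij_square[OF bT bij_betw_id]) (use Mty Ety comp3[OF j k] in auto)
      then show "bij_betw (\<lambda>\<kappa>. vc K (wl K h \<kappa>) (wr K \<phi> j)) (cells K (cmp K g j) k) (cells K (cmp K f j) (cmp K h k))"
        using bE by blast
    qed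
  qed
qed

end


theorem lemma3p10:
  fixes K :: "('o,'a,'c,'m) twocat_data_scheme" and Y :: "('o,'a,'c) yoneda_data"
  assumes "twocat K" and "finitely_complete K" and "good_yoneda K Y"
    and "adm_ob K Y A"
    and "f \<in> hom K A C" and "f \<in> adm Y"
    and "g \<in> hom K A B" and "g \<in> adm Y"
    and "h \<in> hom K B C"
    and "\<phi> \<in> cells K f (cmp K h g)"
    and "\<phi>' \<in> cells K (YF Y g) (cmp K (YF Y f) h)"
    and "vc K (wl K (YF Y f) \<phi>) (chi Y f) = vc K (wr K \<phi>' g) (chi Y g)"
  shows "(left_ext K f g h \<phi> \<longleftrightarrow> left_lift K (YF Y g) (YF Y f) h \<phi>') \<and>
         (pointwise_left_ext K f g h \<phi> \<longleftrightarrow> abs_left_lift K (YF Y g) (YF Y f) h \<phi>') \<and>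
         (abs_left_lift K f h g \<phi> \<longleftrightarrow> iso2 K \<phi>')"
proof -
  interpret L: L310 K Y A B C f g h \<phi> \<phi>'
    unfolding L310_def L310_axioms_def using assms by blast
  show ?thesis using L.part1 L.part2 L.part3 by blast
qed

end
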